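(* There exists $\epsilon_0>0$ such that, for all sufficiently large $a$ and all $\tau\in[0,1]$, every solution $(c,\mu)$ of the slab problem $P_{\tau,a}$ with $c=0$ satisfies $\nu(0)>\epsilon_0$.
   Context: $\Theta=(\theta_{\min},\theta_{\max})$, $0<\theta_{\min}<\theta_{\max}<\infty$, $|\Theta|=\theta_{\max}-\theta_{\min}$, $\alpha,r>0$. For $\tau\in[0,1]$, $g_\tau(\theta)=\theta_{\min}+\tau(\theta-\theta_{\min})$. Slab problem $P_{\tau,a}$: a pair $(c,\mu)$, $c\in\mathbb R$, $\mu\ge0$ of class $C^2$ on $[-a,a]\times\overline\Theta$, with $-c\mu_\xi-g_\tau(\theta)\mu_{\xi\xi}-\alpha\mu_{\theta\theta}=r\mu(1-\nu)$ on $(-a,a)\times\Theta$, $\mu_\theta(\xi,\theta_{\min})=\mu_\theta(\xi,\theta_{\max})=0$, $\mu(-a,\theta)=|\Theta|^{-1}$, $\mu(a,\theta)=0$, where $\nu(\xi)=\int_\Theta\mu(\xi,\theta)d\theta$. *)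

theory Defs
  imports "HOL-Analysis.Analysis"
begin

definition g_tau :: "real \<Rightarrow> real \<Rightarrow> real \<Rightarrow> real" where
  "g_tau tmin \<tau> \<theta> = tmin + \<tau> * (\<theta> - tmin)"

definition nu :: "(real \<Rightarrow> real \<Rightarrow> real) \<Rightarrow> real \<Rightarrow> real \<Rightarrow> real \<Rightarrow> real" where
  "nu \<mu> tmin tmax \<xi> = integral {tmin..tmax} (\<lambda>\<theta>. \<mu> \<xi> \<theta>)"

text \<open>(c, mu) solves the slab problem P_{tau,a}.  mu is C^2 on the closed rectangle
  [-a,a] x [tmin,tmax]: its first partial derivatives mx, mt and the second partial
  derivatives mxx, mxt, mtx, mtt exist (as derivatives within the closed rectangle)
  and are continuous there.\<close>
definition slab_solution ::
  "real \<Rightarrow> real \<Rightarrow> real \<Rightarrow> real \<Rightarrow> real \<Rightarrow> real \<Rightarrow> real \<Rightarrow> (real \<Rightarrow> real \<Rightarrow> real) \<Rightarrow> bool" where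
  "slab_solution tmin tmax \<alpha> r \<tau> a c \<mu> \<longleftrightarrow>
     (let S = {-a..a} \<times> {tmin..tmax} in
     (\<exists>mx mt mxx mxt mtx mtt :: real \<Rightarrow> real \<Rightarrow> real.
        (\<forall>p\<in>S. ((\<lambda>q. \<mu> (fst q) (snd q)) has_derivative
                   (\<lambda>h. mx (fst p) (snd p) * fst h + mt (fst p) (snd p) * snd h)) (at p within S))
      \<and> (\<forall>p\<in>S. ((\<lambda>q. mx (fst q) (snd q)) has_derivative
                   (\<lambda>h. mxx (fst p) (snd p) * fst h + mxt (fst p) (snd p) * snd h)) (at p within S))
      \<and> (\<forall>p\<in>S. ((\<lambda>q. mt (fst q) (snd q)) has_derivative
                   (\<lambda>h. mtx (fst p) (snd p) * fst h + mtt (fst p) (snd p) * snd h)) (at p within S))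
      \<and> continuous_on S (\<lambda>q. \<mu> (fst q) (snd q))
      \<and> continuous_on S (\<lambda>q. mx (fst q) (snd q))
      \<and> continuous_on S (\<lambda>q. mt (fst q) (snd q))
      \<and> continuous_on S (\<lambda>q. mxx (fst q) (snd q))
      \<and> continuous_on S (\<lambda>q. mxt (fst q) (snd q))
      \<and> continuous_on S (\<lambda>q. mtx (fst q) (snd q))
      \<and> continuous_on S (\<lambda>q. mtt (fst q) (snd q))
      \<and> (\<forall>\<xi>\<in>{-a<..<a}. \<forall>\<theta>\<in>{tmin<..<tmax}.
           - c * mx \<xi> \<theta> - g_tau tmin \<tau> \<theta> * mxx \<xi> \<theta> - \<alpha> * mtt \<xi> \<theta>
             = r * \<mu> \<xi> \<theta> * (1 - nu \<mu> tmin tmax \<xi>))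
      \<and> (\<forall>\<xi>\<in>{-a..a}. mt \<xi> tmin = 0 \<and> mt \<xi> tmax = 0))
     \<and> (\<forall>p\<in>S. \<mu> (fst p) (snd p) \<ge> 0)
     \<and> (\<forall>\<theta>\<in>{tmin..tmax}. \<mu> (-a) \<theta> = 1 / (tmax - tmin) \<and> \<mu> a \<theta> = 0))"

end

theory Submission
  imports Defs
begin

lemma one_d:
  fixes w w1 w2 :: "real \<Rightarrow> real" and a T :: real
  assumes a: "a > 0" and T: "T > 0"
  and cont: "continuous_on {-a..a} w"
  and d1: "\<And>x. x \<in> {-a<..<a} \<Longrightarrow> (w has_real_derivative w1 x) (at x)"
  and d2: "\<And>x. x \<in> {-a<..<a} \<Longrightarrow> (w1 has_real_derivative w2 x) (at x)"
  and cv: "\<And>x. x \<in> {-a<..<a} \<Longrightarrow> w x < T \<Longrightarrow> w2 x \<le> 0"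
  and l: "w (-a) \<ge> T" and r: "w a \<ge> 0"
  shows "w 0 \<ge> T/2"
proof (rule ccontr)
  assume "\<not> ?thesis" hence w0: "w 0 < T/2" by simp
  define ll where "ll x = T*(a-x)/(2*a)" for x
  define h where "h x = w x - ll x" for x
  have hc: "continuous_on {-a..a} h" unfolding h_def ll_def using a by (intro continuous_intros cont) auto
  obtain m where m: "m \<in> {-a..a}" "\<forall>y\<in>{-a..a}. h m \<le> h y"
    using continuous_attains_inf[OF compact_Icc _ hc] a by auto
  have h0: "h 0 < 0" using w0 a unfolding h_def ll_def by simp
  have hm: "h m < 0" using m(2)[rule_format, of 0] h0 a by simp
  have hl: "h (-a) \<ge> 0" using l a unfolding h_def ll_def by simp
  have hr: "h a \<ge> 0" using r a unfolding h_def ll_def by simp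
  have mi: "m \<in> {-a<..<a}" using m hm hl hr by (cases "m = -a"; cases "m = a") auto
  have llT: "ll x \<le> T" if "x \<ge> -a" for x
  proof -
    have "T*(a-x) \<le> T*(2*a)" using that T by (intro mult_left_mono) auto
    thus ?thesis unfolding ll_def using a by (simp add: divide_simps)
  qed
  have dh: "(h has_real_derivative (w1 x + T/(2*a))) (at x)" if "x \<in> {-a<..<a}" for x
  proof -
    have "(ll has_real_derivative (- T/(2*a))) (at x)" unfolding ll_def
      using a by (auto intro!: derivative_eq_intros simp: field_simps)
    from DERIV_diff[OF d1[OF that] this] show ?thesis unfolding h_def by simp
  qed
  have h1m: "w1 m + T/(2*a) = 0"
  proof (rule DERIV_local_min[OF dh[OF mi]])
    show "0 < min (m+a) (a-m)" using mi by auto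
    show "\<forall>y. \<bar>m - y\<bar> < min (m + a) (a - m) \<longrightarrow> h m \<le> h y" using m(2) by (auto simp: abs_if split: if_splits)
  qed
  define Q where "Q = {m..a} \<inter> h -` {0..}"
  have Qc: "closed Q" unfolding Q_def
    by (rule continuous_closed_preimage[OF continuous_on_subset[OF hc]]) (use m in auto)
  have Qne: "a \<in> Q" using hr mi unfolding Q_def by auto
  define q where "q = Inf Q"
  have Qb: "bdd_below Q" unfolding Q_def by (auto intro: bdd_belowI[where m=m])
  have qQ: "q \<in> Q" unfolding q_def using closed_contains_Inf[OF _ Qb Qc] Qne by auto
  have qm: "q > m" using qQ hm unfolding Q_def by (cases "q = m") auto
  have qa: "q \<le> a" using qQ unfolding Q_def by auto
  have neg: "h y < 0" if "m \<le> y" "y < q" for y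
  proof (rule ccontr)
    assume "\<not> h y < 0"
    hence "y \<in> Q" using that qa unfolding Q_def by auto
    hence "q \<le> y" unfolding q_def using Qb by (simp add: cInf_lower)
    thus False using that by simp
  qed
  obtain L z where z: "m < z" "z < q" "DERIV h z :> L" "h q - h m = (q - m) * L"
    using MVT[OF qm continuous_on_subset[OF hc], of] mi qa
    by (smt (verit, best) atLeastAtMost_iff dh greaterThanLessThan_iff real_differentiable_def subsetI)
  have zi: "z \<in> {-a<..<a}" using z mi qa by auto
  have L: "L = w1 z + T/(2*a)" using DERIV_unique[OF z(3) dh[OF zi]] .
  have "w1 z \<le> w1 m"
  proof (rule DERIV_nonpos_imp_nonincreasing[of m z w1])
    show "m \<le> z" using z by simp
    fix x assume x: "m \<le> x" "x \<le> z"
    have xi: "x \<in> {-a<..<a}" using x mi zi by auto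
    have "h x < 0" using neg x z by simp
    hence "w x < T" using llT[of x] xi unfolding h_def by auto
    thus "\<exists>y. DERIV w1 x :> y \<and> y \<le> 0" using d2[OF xi] cv[OF xi] by blast
  qed
  hence "L \<le> 0" using L h1m by simp
  hence "h q \<le> h m" using z qm by (smt (verit) mult_nonneg_nonpos)
  thus False using hm qQ unfolding Q_def by auto
qed


lemma partial_x:
  fixes f fx ft :: "real \<Rightarrow> real \<Rightarrow> real"
  assumes d: "\<forall>p\<in>A\<times>B. ((\<lambda>q. f (fst q) (snd q)) has_derivative
        (\<lambda>h. fx (fst p) (snd p) * fst h + ft (fst p) (snd p) * snd h)) (at p within A\<times>B)"
  and x: "x \<in> A" and t: "t \<in> B"
  shows "((\<lambda>x. f x t) has_real_derivative fx x t) (at x within A)"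
proof -
  have g: "((\<lambda>x. (x, t)) has_derivative (\<lambda>h. (h, 0))) (at x within A)"
    by (auto intro!: derivative_eq_intros)
  have "((\<lambda>q. f (fst q) (snd q)) has_derivative
        (\<lambda>h. fx x t * fst h + ft x t * snd h)) (at (x,t) within (\<lambda>x. (x, t)) ` A)"
    using d x t by (auto intro: has_derivative_subset)
  from has_derivative_in_compose[OF g this]
  show ?thesis unfolding has_field_derivative_def by simp
qed

lemma partial_t:
  fixes f fx ft :: "real \<Rightarrow> real \<Rightarrow> real"
  assumes d: "\<forall>p\<in>A\<times>B. ((\<lambda>q. f (fst q) (snd q)) has_derivative
        (\<lambda>h. fx (fst p) (snd p) * fst h + ft (fst p) (snd p) * snd h)) (at p within A\<times>B)"
  and x: "x \<in> A" and t: "t \<in> B"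
  shows "((\<lambda>t. f x t) has_real_derivative ft x t) (at t within B)"
proof -
  have g: "((\<lambda>t. (x, t)) has_derivative (\<lambda>h. (0, h))) (at t within B)"
    by (auto intro!: derivative_eq_intros)
  have "((\<lambda>q. f (fst q) (snd q)) has_derivative
        (\<lambda>h. fx x t * fst h + ft x t * snd h)) (at (x,t) within (\<lambda>t. (x, t)) ` B)"
    using d x t by (auto intro: has_derivative_subset)
  from has_derivative_in_compose[OF g this]
  show ?thesis unfolding has_field_derivative_def by simp
qed

lemma cont_prod:
  fixes f :: "real \<Rightarrow> real \<Rightarrow> real" and G :: "real \<Rightarrow> real"
  assumes "continuous_on (A\<times>B) (\<lambda>q. f (fst q) (snd q))" "continuous_on B G" "U \<subseteq> A"
  shows "continuous_on (U \<times> B) (\<lambda>(x,t). G t * f x t)"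
proof -
  have "continuous_on (U\<times>B) (\<lambda>q. G (snd q) * f (fst q) (snd q))"
  proof (intro continuous_on_mult)
    show "continuous_on (U \<times> B) (\<lambda>q. G (snd q))"
      by (rule continuous_on_compose2[OF assms(2)]) (auto intro!: continuous_intros)
    show "continuous_on (U \<times> B) (\<lambda>q. f (fst q) (snd q))"
      by (rule continuous_on_subset[OF assms(1)]) (use assms(3) in auto)
  qed
  thus ?thesis by (simp add: case_prod_beta)
qed

lemma int_deriv:
  fixes f fx :: "real \<Rightarrow> real \<Rightarrow> real" and G :: "real \<Rightarrow> real"
  assumes d: "\<And>x t. x \<in> {-a..a} \<Longrightarrow> t \<in> {c..d} \<Longrightarrow> ((\<lambda>x. f x t) has_real_derivative fx x t) (at x within {-a..a})"
  and cf: "continuous_on ({-a..a}\<times>{c..d}) (\<lambda>q. f (fst q) (snd q))"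
  and cfx: "continuous_on ({-a..a}\<times>{c..d}) (\<lambda>q. fx (fst q) (snd q))"
  and cG: "continuous_on {c..d} G"
  and x0: "x0 \<in> {-a<..<a}"
  shows "((\<lambda>x. integral {c..d} (\<lambda>t. G t * f x t)) has_real_derivative integral {c..d} (\<lambda>t. G t * fx x0 t)) (at x0)"
proof -
  have "((\<lambda>x. integral (cbox c d) (\<lambda>t. G t * f x t)) has_real_derivative integral (cbox c d) (\<lambda>t. G t * fx x0 t)) (at x0 within {-a<..<a})"
  proof (rule leibniz_rule_field_derivative)
    fix x t assume x: "x \<in> {-a<..<a}" and t: "t \<in> cbox c d"
    have "((\<lambda>x. f x t) has_real_derivative fx x t) (at x within {-a<..<a})"
      by (rule has_field_derivative_subset[OF d]) (use x t in auto)
    thus "((\<lambda>x. G t * f x t) has_real_derivative G t * fx x t) (at x within {-a<..<a})"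
      by (auto intro!: derivative_eq_intros)
  next
    fix x assume x: "x \<in> {-a<..<a}"
    have "continuous_on {c..d} (\<lambda>t. G t * f x t)"
    proof (intro continuous_on_mult cG)
      show "continuous_on {c..d} (\<lambda>t. f x t)"
        by (rule continuous_on_compose2[OF cf, where f="\<lambda>t. (x,t)", simplified])
           (use x in \<open>auto intro!: continuous_intros\<close>)
    qed
    thus "(\<lambda>t. G t * f x t) integrable_on cbox c d" by (simp add: integrable_continuous_interval)
  next
    show "continuous_on ({-a<..<a} \<times> cbox c d) (\<lambda>(x, t). G t * fx x t)"
      unfolding cbox_interval by (rule cont_prod[OF cfx cG]) auto
  next
    show "x0 \<in> {-a<..<a}" by (rule x0)
  next
    show "convex {-a<..<a}" by (rule convex_real_interval)
  qed
  thus ?thesis unfolding at_within_open[OF x0 open_greaterThanLessThan] cbox_interval .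
qed



lemma cont_slice:
  fixes f :: "real \<Rightarrow> real \<Rightarrow> real"
  assumes "continuous_on (A\<times>B) (\<lambda>q. f (fst q) (snd q))" "x \<in> A"
  shows "continuous_on B (f x)"
  by (rule continuous_on_compose2[OF assms(1), where f="\<lambda>t. (x,t)", simplified])
     (use assms(2) in \<open>auto intro!: continuous_intros\<close>)

lemma main:
  fixes tmin tmax \<alpha> r :: real
  assumes tmin: "0 < tmin" and tt: "tmin < tmax" and "\<alpha> > 0" and r: "r > 0"
  and a: "1 \<le> a" and \<tau>: "\<tau> \<in> {0..1}" and sol: "slab_solution tmin tmax \<alpha> r \<tau> a 0 \<mu>"
  shows "nu \<mu> tmin tmax 0 \<ge> tmin / (2*tmax)"
proof -
  let ?S = "{-a..a} \<times> {tmin..tmax}"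
  let ?I = "{tmin..tmax}"
  obtain mx mt mxx mxt mtx mtt :: "real \<Rightarrow> real \<Rightarrow> real" where
    D1: "\<forall>p\<in>?S. ((\<lambda>q. \<mu> (fst q) (snd q)) has_derivative
                   (\<lambda>h. mx (fst p) (snd p) * fst h + mt (fst p) (snd p) * snd h)) (at p within ?S)"
    and D2: "\<forall>p\<in>?S. ((\<lambda>q. mx (fst q) (snd q)) has_derivative
                   (\<lambda>h. mxx (fst p) (snd p) * fst h + mxt (fst p) (snd p) * snd h)) (at p within ?S)"
    and D3: "\<forall>p\<in>?S. ((\<lambda>q. mt (fst q) (snd q)) has_derivative
                   (\<lambda>h. mtx (fst p) (snd p) * fst h + mtt (fst p) (snd p) * snd h)) (at p within ?S)"
    and C0: "continuous_on ?S (\<lambda>q. \<mu> (fst q) (snd q))"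
    and C1: "continuous_on ?S (\<lambda>q. mx (fst q) (snd q))"
    and C2: "continuous_on ?S (\<lambda>q. mt (fst q) (snd q))"
    and C3: "continuous_on ?S (\<lambda>q. mxx (fst q) (snd q))"
    and C6: "continuous_on ?S (\<lambda>q. mtt (fst q) (snd q))"
    and pde: "\<forall>\<xi>\<in>{-a<..<a}. \<forall>\<theta>\<in>{tmin<..<tmax}.
           - 0 * mx \<xi> \<theta> - g_tau tmin \<tau> \<theta> * mxx \<xi> \<theta> - \<alpha> * mtt \<xi> \<theta>
             = r * \<mu> \<xi> \<theta> * (1 - nu \<mu> tmin tmax \<xi>)"
    and bc: "\<forall>\<xi>\<in>{-a..a}. mt \<xi> tmin = 0 \<and> mt \<xi> tmax = 0"
    and nn: "\<forall>p\<in>?S. \<mu> (fst p) (snd p) \<ge> 0"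
    and bd: "\<forall>\<theta>\<in>?I. \<mu> (-a) \<theta> = 1 / (tmax - tmin) \<and> \<mu> a \<theta> = 0"
    using sol unfolding slab_solution_def Let_def by blast
  define G where "G \<theta> = g_tau tmin \<tau> \<theta>" for \<theta>
  have cG: "continuous_on ?I G" unfolding G_def g_tau_def by (intro continuous_intros)
  have Gb: "tmin \<le> G \<theta> \<and> G \<theta> \<le> tmax" if "\<theta> \<in> ?I" for \<theta>
  proof -
    have "\<tau> * (\<theta> - tmin) \<le> 1 * (\<theta> - tmin)" using \<tau> that by (intro mult_right_mono) auto
    moreover have "0 \<le> \<tau> * (\<theta> - tmin)" using \<tau> that by auto
    ultimately show ?thesis using that unfolding G_def g_tau_def by auto
  qed
  define w where "w x = integral ?I (\<lambda>\<theta>. G \<theta> * \<mu> x \<theta>)" for x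
  define w1 where "w1 x = integral ?I (\<lambda>\<theta>. G \<theta> * mx x \<theta>)" for x
  define w2 where "w2 x = integral ?I (\<lambda>\<theta>. G \<theta> * mxx x \<theta>)" for x
  define N where "N x = nu \<mu> tmin tmax x" for x
  have dx: "((\<lambda>x. \<mu> x t) has_real_derivative mx x t) (at x within {-a..a})"
    if "x \<in> {-a..a}" "t \<in> ?I" for x t using partial_x[OF D1 that] .
  have dxx: "((\<lambda>x. mx x t) has_real_derivative mxx x t) (at x within {-a..a})"
    if "x \<in> {-a..a}" "t \<in> ?I" for x t using partial_x[OF D2 that] .
  have dtt: "((\<lambda>t. mt x t) has_real_derivative mtt x t) (at t within ?I)"
    if "x \<in> {-a..a}" "t \<in> ?I" for x t using partial_t[OF D3 that] .
  have W1: "(w has_real_derivative w1 x) (at x)" if "x \<in> {-a<..<a}" for x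
    unfolding w_def w1_def by (rule int_deriv[OF dx C0 C1 cG that])
  have W2: "(w1 has_real_derivative w2 x) (at x)" if "x \<in> {-a<..<a}" for x
    unfolding w1_def w2_def by (rule int_deriv[OF dxx C1 C3 cG that])
  have Wc: "continuous_on {-a..a} w"
  proof -
    have "continuous_on {-a..a} (\<lambda>x. integral (cbox tmin tmax) (\<lambda>t. G t * \<mu> x t))"
      by (rule integral_continuous_on_param) (unfold cbox_interval, rule cont_prod[OF C0 cG], auto)
    thus ?thesis unfolding w_def cbox_interval .
  qed
  have integ: "(\<lambda>\<theta>. G \<theta> * f x \<theta>) integrable_on ?I" "(f x) integrable_on ?I"
    if "continuous_on ?S (\<lambda>q. f (fst q) (snd q))" "x \<in> {-a..a}" for f x
    using cont_slice[OF that] cG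
    by (auto intro!: integrable_continuous_interval continuous_intros)
  have bnds: "0 \<le> N x \<and> tmin * N x \<le> w x \<and> w x \<le> tmax * N x" if x: "x \<in> {-a..a}" for x
  proof -
    have m0: "\<mu> x \<theta> \<ge> 0" if "\<theta> \<in> ?I" for \<theta> using nn x that by auto
    have ic: "(\<lambda>\<theta>. c * \<mu> x \<theta>) integrable_on ?I" for c
      using integrable_on_cmult_left[OF integ(2)[OF C0 x], of c] by simp
    have "0 \<le> N x" unfolding N_def nu_def using m0 by (intro integral_nonneg integ[OF C0 x]) auto
    moreover have "integral ?I (\<lambda>\<theta>. tmin * \<mu> x \<theta>) \<le> w x" unfolding w_def
      using integ[OF C0 x] ic Gb m0 by (intro integral_le) (auto intro!: mult_right_mono)
    moreover have "w x \<le> integral ?I (\<lambda>\<theta>. tmax * \<mu> x \<theta>)" unfolding w_def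
      using integ[OF C0 x] ic Gb m0 by (intro integral_le) (auto intro!: mult_right_mono)
    ultimately show ?thesis unfolding N_def nu_def by simp
  qed
  have W2eq: "w2 x = - r * N x * (1 - N x)" if x: "x \<in> {-a<..<a}" for x
  proof -
    have xc: "x \<in> {-a..a}" using x by auto
    have "w2 x = integral ?I (\<lambda>\<theta>. -\<alpha> * mtt x \<theta> - r*(1 - N x) * \<mu> x \<theta>)"
      unfolding w2_def
    proof (rule integral_spike[where S="{tmin,tmax}"])
      fix \<theta> assume "\<theta> \<in> ?I - {tmin,tmax}"
      hence "\<theta> \<in> {tmin<..<tmax}" by auto
      with pde x show "-\<alpha> * mtt x \<theta> - r*(1 - N x) * \<mu> x \<theta> = G \<theta> * mxx x \<theta>"
        unfolding G_def N_def by (auto simp: algebra_simps)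
    qed auto
    also have "\<dots> = -\<alpha> * 0 - r*(1 - N x) * N x"
    proof (rule integral_unique, intro has_integral_diff has_integral_mult_right)
      have "(mtt x has_integral (mt x tmax - mt x tmin)) ?I"
        using tt dtt xc by (intro fundamental_theorem_of_calculus)
          (auto simp: has_real_derivative_iff_has_vector_derivative[symmetric])
      thus "((\<lambda>\<theta>. mtt x \<theta>) has_integral 0) ?I" using bc xc by simp
      show "((\<lambda>\<theta>. \<mu> x \<theta>) has_integral N x) ?I" unfolding N_def nu_def
        using integ(2)[OF C0 xc] by (simp add: integrable_integral)
    qed
    finally show ?thesis by (simp add: algebra_simps)
  qed
  have wl: "w (-a) \<ge> tmin"
  proof -
    have "N (-a) = integral ?I (\<lambda>\<theta>. 1 / (tmax - tmin))" unfolding N_def nu_def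
      using bd by (intro integral_cong) auto
    also have "\<dots> = 1" using tt by simp
    finally show ?thesis using bnds[of "-a"] a by auto
  qed
  have wr: "w a \<ge> 0" using bnds[of a] a tmin by (smt (verit) atLeastAtMost_iff mult_nonneg_nonneg)
  have "w 0 \<ge> tmin / 2"
  proof (rule one_d[OF _ tmin Wc W1 W2 _ wl wr])
    show "0 < a" using a by simp
    fix x assume x: "x \<in> {-a<..<a}" and lt: "w x < tmin"
    have b: "0 \<le> N x" "tmin * N x \<le> w x" using bnds[of x] x by auto
    have "N x < 1" using b lt tmin by (smt (verit) mult_le_cancel_left1)
    thus "w2 x \<le> 0" unfolding W2eq[OF x] using b r by (simp add: mult_nonneg_nonneg)
  qed
  moreover have "w 0 \<le> tmax * N 0" using bnds[of 0] a by auto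
  ultimately have "tmin / 2 \<le> tmax * N 0" by simp
  thus ?thesis unfolding N_def using tmin tt by (simp add: field_simps)
qed


theorem lemma3p4:
  fixes tmin tmax \<alpha> r :: real
  assumes "0 < tmin" and "tmin < tmax" and "\<alpha> > 0" and "r > 0"
  shows "\<exists>\<epsilon>0 > 0. \<exists>A. \<forall>a \<ge> A. \<forall>\<tau> \<in> {0..1}. \<forall>\<mu>.
           slab_solution tmin tmax \<alpha> r \<tau> a 0 \<mu> \<longrightarrow> nu \<mu> tmin tmax 0 > \<epsilon>0"
proof -
  have e: "tmin / (4*tmax) > 0" using assms by simp
  have lt: "tmin / (4*tmax) < tmin / (2*tmax)" using assms by (simp add: field_simps)
  have "\<forall>a \<ge> 1. \<forall>\<tau> \<in> {0..1}. \<forall>\<mu>.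
           slab_solution tmin tmax \<alpha> r \<tau> a 0 \<mu> \<longrightarrow> nu \<mu> tmin tmax 0 > tmin / (4*tmax)"
    using main[OF assms] lt by (meson less_le_trans)
  thus ?thesis using e by blast
qed

end
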